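(* Let $H$ be a finite simple graph on vertex set $\{x_1,\dots,x_n\}$ and $G=w(H)$, a graph on $2n$ vertices, and suppose $|E(G)|\ge n+1$. Let $\mathbb{K}$ be a field of characteristic $0$, let $A=A(G)$ be the Artinian algebra of $G$ over $\mathbb{K}$, and let $\ell=x_1+\dots+x_n+y_1+\dots+y_n$ be the sum of the variables. Then the multiplication map $\times\ell:A_i\to A_{i+1}$ has maximal rank (i.e. rank $\min\{\dim_{\mathbb{K}}A_i,\dim_{\mathbb{K}}A_{i+1}\}$) for every $i<n/2$ and for $i=n-1$; moreover for $i<n/2$ the map is injective.
   Context: For a graph $H$ with vertex set $\{x_1,\dots,x_n\}$, the whiskered graph $w(H)$ has vertex set $\{x_1,\dots,x_n,y_1,\dots,y_n\}$ and edge set $E(H)\cup\{\{x_i,y_i\}: i=1,\dots,n\}$. For a graph $G$ on vertices $z_1,\dots,z_m$, its Artinian algebra over $\mathbb{K}$ is $A(G)=\mathbb{K}[z_1,\dots,z_m]/(\langle z_1^2,\dots,z_m^2\rangle+I(G))$, where $I(G)=\langle z_iz_j:\{z_i,z_j\}\in E(G)\rangle$ is the edge ideal; it is standard graded, $A=\bigoplus_i A_i$. *)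

theory Defs
  imports Main "HOL.Vector_Spaces" "HOL-Library.Poly_Mapping"
begin

text \<open>Polynomials over a field 'k in commuting variables indexed by 'v are
  represented as finitely supported maps from monomials (exponent vectors
  'v to nat) to coefficients.\<close>

type_synonym ('v, 'k) mpoly = "('v \<Rightarrow>\<^sub>0 nat) \<Rightarrow>\<^sub>0 'k"

definition var :: "'v \<Rightarrow> ('v, 'k::comm_ring_1) mpoly" where
  "var v = Poly_Mapping.single (Poly_Mapping.single v 1) 1"

definition pscale :: "'k::comm_ring_1 \<Rightarrow> ('v, 'k) mpoly \<Rightarrow> ('v, 'k) mpoly" where
  "pscale c p = Poly_Mapping.single 0 c * p"

definition mdeg :: "('v \<Rightarrow>\<^sub>0 nat) \<Rightarrow> nat" where
  "mdeg m = (\<Sum>v\<in>Poly_Mapping.keys m. Poly_Mapping.lookup m v)"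

definition homog :: "nat \<Rightarrow> ('v, 'k::comm_ring_1) mpoly set" where
  "homog i = {p. \<forall>m\<in>Poly_Mapping.keys p. mdeg m = i}"

definition ideal_gen :: "('v, 'k::comm_ring_1) mpoly set \<Rightarrow> ('v, 'k) mpoly set" where
  "ideal_gen S = {p. \<exists>F c. finite F \<and> F \<subseteq> S \<and> p = (\<Sum>g\<in>F. c g * g)}"

text \<open>Edge ideal I(G) of a graph given by an edge relation, and the ideal
  \<langle>z_1^2,...,z_m^2\<rangle> + I(G) defining the Artinian algebra A(G) over the vertex
  set = all elements of the (finite) vertex type.\<close>
definition edge_ideal :: "('v \<Rightarrow> 'v \<Rightarrow> bool) \<Rightarrow> ('v, 'k::comm_ring_1) mpoly set" where
  "edge_ideal E = ideal_gen {var u * var v | u v. E u v}"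

definition artin_ideal :: "('v \<Rightarrow> 'v \<Rightarrow> bool) \<Rightarrow> ('v, 'k::comm_ring_1) mpoly set" where
  "artin_ideal E = ideal_gen ({var v * var v | v. True} \<union> {var u * var v | u v. E u v})"

text \<open>dim_K A(G)_i = dim_K (S_i / J_i) = dim S_i - dim (J \<inter> S_i), where S is the
  polynomial ring and J the defining ideal (all spaces finite dimensional).\<close>
definition artin_dim :: "('v::finite \<Rightarrow> 'v \<Rightarrow> bool) \<Rightarrow> nat \<Rightarrow> 'k::field itself \<Rightarrow> nat" where
  "artin_dim E i (_::'k itself) =
     vector_space.dim (pscale :: 'k \<Rightarrow> ('v,'k) mpoly \<Rightarrow> _) (homog i)
     - vector_space.dim (pscale :: 'k \<Rightarrow> ('v,'k) mpoly \<Rightarrow> _) (artin_ideal E \<inter> homog i)"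

text \<open>Rank of the map A_i \<rightarrow> A_(i+1), [p] \<mapsto> [f p]: the dimension of its image
  (f(S_i) + J_(i+1)) / J_(i+1).\<close>
definition artin_mult_rank ::
  "('v::finite \<Rightarrow> 'v \<Rightarrow> bool) \<Rightarrow> ('v,'k::field) mpoly \<Rightarrow> nat \<Rightarrow> nat" where
  "artin_mult_rank E f i =
     vector_space.dim (pscale :: 'k \<Rightarrow> ('v,'k) mpoly \<Rightarrow> _)
        ((\<lambda>p. f * p) ` homog i \<union> (artin_ideal E \<inter> homog (Suc i)))
     - vector_space.dim (pscale :: 'k \<Rightarrow> ('v,'k) mpoly \<Rightarrow> _) (artin_ideal E \<inter> homog (Suc i))"

definition artin_mult_injective ::
  "('v \<Rightarrow> 'v \<Rightarrow> bool) \<Rightarrow> ('v,'k::comm_ring_1) mpoly \<Rightarrow> nat \<Rightarrow> bool" where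
  "artin_mult_injective E f i = (\<forall>p\<in>homog i. f * p \<in> artin_ideal E \<longrightarrow> p \<in> artin_ideal E)"

text \<open>Whiskered graph w(H): vertices Inl x (the x_i) and Inr x (the y_i).\<close>
fun whisker :: "('a \<Rightarrow> 'a \<Rightarrow> bool) \<Rightarrow> 'a + 'a \<Rightarrow> 'a + 'a \<Rightarrow> bool" where
  "whisker E (Inl a) (Inl b) = E a b"
| "whisker E (Inl a) (Inr b) = (a = b)"
| "whisker E (Inr a) (Inl b) = (a = b)"
| "whisker E (Inr a) (Inr b) = False"

definition edges :: "('v \<Rightarrow> 'v \<Rightarrow> bool) \<Rightarrow> 'v set set" where
  "edges E = {{u, v} | u v. E u v}"

lemma vector_space_pscale: "vector_space (pscale :: 'k::field \<Rightarrow> ('v,'k) mpoly \<Rightarrow> _)"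
  unfolding vector_space_def pscale_def
  by (simp add: distrib_left distrib_right single_add mult.assoc[symmetric])
     (metis mult_single add_0 mult.assoc)

end

theory Submission
  imports Defs
begin



definition Up :: "('b set \<Rightarrow> 'k::comm_ring_1) \<Rightarrow> 'b set \<Rightarrow> 'k" where
  "Up g T = (\<Sum>t\<in>T. g (T - {t}))"
definition Dn :: "'b set \<Rightarrow> ('b set \<Rightarrow> 'k::comm_ring_1) \<Rightarrow> 'b set \<Rightarrow> 'k" where
  "Dn N h S = (\<Sum>t\<in>N - S. h (insert t S))"

lemma DU_UD:
  fixes g :: "'b set \<Rightarrow> 'k::comm_ring_1"
  assumes N: "finite N" and S: "S \<subseteq> N"
  shows "Dn N (Up g) S - Up (Dn N g) S = (of_nat (card N) - 2 * of_nat (card S)) * g S"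
proof -
  have fS: "finite S" using N S finite_subset by blast
  define X where "X = (\<Sum>t\<in>N - S. \<Sum>u\<in>S. g (insert t (S - {u})))"
  have 1: "Dn N (Up g) S = of_nat (card (N - S)) * g S + X"
  proof -
    have "Dn N (Up g) S = (\<Sum>t\<in>N - S. g S + (\<Sum>u\<in>S. g (insert t (S - {u}))))"
      unfolding Dn_def Up_def
    proof (rule sum.cong[OF refl])
      fix t assume t: "t \<in> N - S"
      have "(\<Sum>u\<in>insert t S. g (insert t S - {u})) = g (insert t S - {t}) + (\<Sum>u\<in>S. g (insert t S - {u}))"
        using t fS by (simp add: sum.insert)
      also have "insert t S - {t} = S" using t by auto
      also have "(\<Sum>u\<in>S. g (insert t S - {u})) = (\<Sum>u\<in>S. g (insert t (S - {u})))"
        by (intro sum.cong refl arg_cong[where f=g]) (use t in auto)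
      finally show "(\<Sum>u\<in>insert t S. g (insert t S - {u})) = g S + (\<Sum>u\<in>S. g (insert t (S - {u})))" .
    qed
    also have "\<dots> = of_nat (card (N - S)) * g S + X"
      by (simp add: sum.distrib X_def)
    finally show ?thesis .
  qed
  have 2: "Up (Dn N g) S = of_nat (card S) * g S + X"
  proof -
    have "Up (Dn N g) S = (\<Sum>u\<in>S. g S + (\<Sum>t\<in>N - S. g (insert t (S - {u}))))"
      unfolding Dn_def Up_def
    proof (rule sum.cong[OF refl])
      fix u assume u: "u \<in> S"
      have e: "N - (S - {u}) = insert u (N - S)" using u S by auto
      have "(\<Sum>t\<in>N - (S - {u}). g (insert t (S - {u}))) = g (insert u (S - {u})) + (\<Sum>t\<in>N - S. g (insert t (S - {u})))"
        unfolding e using N u by (simp add: sum.insert)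
      also have "insert u (S - {u}) = S" using u by auto
      finally show "(\<Sum>t\<in>N - (S - {u}). g (insert t (S - {u}))) = g S + (\<Sum>t\<in>N - S. g (insert t (S - {u})))" .
    qed
    also have "\<dots> = of_nat (card S) * g S + X"
      by (simp add: sum.distrib X_def sum.swap[of _ S])
    finally show ?thesis .
  qed
  have "card (N - S) = card N - card S" using S fS by (simp add: card_Diff_subset)
  moreover have "card S \<le> card N" using S N card_mono by blast
  ultimately show ?thesis using 1 2 by (simp add: of_nat_diff algebra_simps)
qed

lemma eigen_step:
  fixes g :: "'b set \<Rightarrow> 'k::field_char_0"
  assumes N: "finite N" and d: "2 * d < card N"
    and supp: "\<forall>T. g T \<noteq> 0 \<longrightarrow> T \<subseteq> N \<and> card T = d" and T0: "g T0 \<noteq> 0"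
    and DU: "\<forall>S. S \<subseteq> N \<and> card S = d \<longrightarrow> Dn N (Up g) S = \<mu> * g S"
    and mu: "\<mu> \<noteq> of_nat (card N - 2 * d)"
  defines "h \<equiv> (\<lambda>S. if S \<subseteq> N then Dn N g S else 0)"
  shows "0 < d \<and> (\<exists>S0. h S0 \<noteq> 0) \<and> (\<forall>T. h T \<noteq> 0 \<longrightarrow> T \<subseteq> N \<and> card T = d - 1)
     \<and> (\<forall>S. S \<subseteq> N \<and> card S = d - 1 \<longrightarrow> Dn N (Up h) S = (\<mu> - of_nat (card N - 2 * d)) * h S)"
proof -
  define c :: 'k where "c = of_nat (card N - 2 * d)"
  have UD: "Up (Dn N g) S = (\<mu> - c) * g S" if "S \<subseteq> N" "card S = d" for S
  proof -
    have "Dn N (Up g) S - Up (Dn N g) S = (of_nat (card N) - 2 * of_nat (card S)) * g S"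
      using DU_UD[OF N that(1)] .
    moreover have "(of_nat (card N) - 2 * of_nat (card S) :: 'k) = c"
      using d that(2) by (simp add: c_def of_nat_diff)
    ultimately show ?thesis using DU that by (simp add: algebra_simps)
  qed
  have Uh: "Up h S = Up (Dn N g) S" if "S \<subseteq> N" for S
    unfolding Up_def h_def using that by (intro sum.cong) auto
  have hsupp: "\<forall>T. h T \<noteq> 0 \<longrightarrow> T \<subseteq> N \<and> Suc (card T) = d"
  proof (intro allI impI)
    fix T assume hT: "h T \<noteq> 0"
    then have TN: "T \<subseteq> N" unfolding h_def by (auto split: if_splits)
    with hT have "Dn N g T \<noteq> 0" unfolding h_def by auto
    then obtain t where t: "t \<in> N - T" "g (insert t T) \<noteq> 0"
      unfolding Dn_def by (meson sum.not_neutral_contains_not_neutral)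
    then have "card (insert t T) = d" using supp by blast
    moreover have "finite T" using TN N finite_subset by blast
    ultimately show "T \<subseteq> N \<and> Suc (card T) = d" using t TN by simp
  qed
  have hne: "\<exists>S0. h S0 \<noteq> 0"
  proof (rule ccontr)
    assume "\<not> ?thesis"
    then have "Up h T0 = 0" unfolding Up_def by simp
    moreover have "T0 \<subseteq> N" "card T0 = d" using supp T0 by auto
    ultimately have "(\<mu> - c) * g T0 = 0" using UD Uh by simp
    then show False using T0 mu c_def by simp
  qed
  then obtain S0 where "h S0 \<noteq> 0" by blast
  then have dpos: "0 < d" using hsupp by fastforce
  have "Dn N (Up h) S = (\<mu> - c) * h S" if S: "S \<subseteq> N" "card S = d - 1" for S
  proof -
    have fS: "finite S" using S N finite_subset by blast
    have "Dn N (Up h) S = (\<Sum>t\<in>N - S. (\<mu> - c) * g (insert t S))"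
      unfolding Dn_def
    proof (rule sum.cong[OF refl])
      fix t assume t: "t \<in> N - S"
      have "card (insert t S) = d" using t fS S dpos by simp
      then show "Up h (insert t S) = (\<mu> - c) * g (insert t S)"
        using Uh UD t S by simp
    qed
    also have "\<dots> = (\<mu> - c) * h S" using S by (simp add: h_def Dn_def sum_distrib_left)
    finally show ?thesis .
  qed
  then show ?thesis using dpos hne hsupp c_def by auto
qed

lemma eigen:
  fixes N :: "'b set"
  assumes N: "finite N"
  shows "2 * d < card N \<Longrightarrow> (\<forall>T. g T \<noteq> 0 \<longrightarrow> T \<subseteq> N \<and> card T = d) \<Longrightarrow> g T0 \<noteq> 0 \<Longrightarrow>
    (\<forall>S. S \<subseteq> N \<and> card S = d \<longrightarrow> Dn N (Up g) S = \<mu> * g S) \<Longrightarrow> \<exists>k>0. \<mu> = (of_nat k :: 'k::field_char_0)"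
proof (induction d arbitrary: g T0 \<mu>)
  case (0 g T0 \<mu>)
  show ?case
  proof (cases "\<mu> = of_nat (card N - 2 * 0)")
    case True then show ?thesis using "0.prems"(1) by auto
  next
    case False
    from eigen_step[OF N "0.prems"(1-4) False] show ?thesis by simp
  qed
next
  case (Suc d g T0 \<mu>)
  show ?case
  proof (cases "\<mu> = of_nat (card N - 2 * Suc d)")
    case True then show ?thesis using Suc.prems(1) by (intro exI[of _ "card N - 2 * Suc d"]) auto
  next
    case False
    define h where "h \<equiv> (\<lambda>S. if S \<subseteq> N then Dn N g S else (0::'k))"
    from eigen_step[OF N Suc.prems(1-4) False] obtain S0 where
      "h S0 \<noteq> 0" "\<forall>T. h T \<noteq> 0 \<longrightarrow> T \<subseteq> N \<and> card T = d"
      "\<forall>S. S \<subseteq> N \<and> card S = d \<longrightarrow> Dn N (Up h) S = (\<mu> - of_nat (card N - 2 * Suc d)) * h S"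
      unfolding h_def by auto
    from Suc.IH[OF _ this(2,1,3)] Suc.prems(1) obtain k where k: "k > 0"
      "\<mu> - of_nat (card N - 2 * Suc d) = of_nat k" by auto
    then have "\<mu> = of_nat (k + (card N - 2 * Suc d))" by (simp add: algebra_simps)
    then show ?thesis using k by (intro exI[of _ "k + (card N - 2 * Suc d)"]) auto
  qed
qed

lemma boolean_inj:
  fixes g :: "'b set \<Rightarrow> 'k::field_char_0"
  assumes N: "finite N" and d: "2 * d < card N"
    and supp: "\<forall>T. g T \<noteq> 0 \<longrightarrow> T \<subseteq> N \<and> card T = d"
    and U: "\<forall>T. T \<subseteq> N \<longrightarrow> (\<Sum>t\<in>T. g (T - {t})) = 0"
  shows "g T = 0"
proof (rule ccontr)
  assume T: "g T \<noteq> 0"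
  have "\<forall>S. S \<subseteq> N \<and> card S = d \<longrightarrow> Dn N (Up g) S = 0 * g S"
    using U unfolding Dn_def Up_def by auto
  from eigen[OF N d supp T this] show False by auto
qed




definition e :: "'v \<Rightarrow> 'v \<Rightarrow>\<^sub>0 nat" where "e v = Poly_Mapping.single v 1"
definition ind :: "'v set \<Rightarrow> 'v \<Rightarrow>\<^sub>0 nat" where "ind S = (\<Sum>v\<in>S. e v)"
definition monom :: "('v \<Rightarrow>\<^sub>0 nat) \<Rightarrow> ('v, 'k::comm_ring_1) mpoly" where
  "monom m = Poly_Mapping.single m 1"
definition indep :: "('v \<Rightarrow> 'v \<Rightarrow> bool) \<Rightarrow> 'v set \<Rightarrow> bool" where
  "indep W S = (\<forall>u\<in>S. \<forall>v\<in>S. \<not> W u v)"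
definition good :: "('v \<Rightarrow> 'v \<Rightarrow> bool) \<Rightarrow> ('v \<Rightarrow>\<^sub>0 nat) \<Rightarrow> bool" where
  "good W m = (\<exists>S. finite S \<and> indep W S \<and> m = ind S)"
definition bad :: "('v \<Rightarrow> 'v \<Rightarrow> bool) \<Rightarrow> ('v \<Rightarrow>\<^sub>0 nat) \<Rightarrow> bool" where
  "bad W m = (\<exists>g r. m = g + r \<and> ((\<exists>v. g = e v + e v) \<or> (\<exists>u v. W u v \<and> g = e u + e v)))"

lemma lookup_e: "Poly_Mapping.lookup (e v) w = (if v = w then 1 else 0)"
  by (simp add: e_def lookup_single when_def)

lemma lookup_ind: "finite S \<Longrightarrow> Poly_Mapping.lookup (ind S) v = (if v \<in> S then 1 else 0)"
  by (simp add: ind_def lookup_sum lookup_e)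

lemma keys_ind: "finite S \<Longrightarrow> Poly_Mapping.keys (ind S) = S"
  by (auto simp: in_keys_iff lookup_ind split: if_splits)

lemma mdeg_ind: "finite S \<Longrightarrow> mdeg (ind S) = card S"
  by (simp add: mdeg_def keys_ind lookup_ind)

lemma ind_inj: "finite S \<Longrightarrow> finite T \<Longrightarrow> ind S = ind T \<Longrightarrow> S = T"
  by (metis keys_ind)

lemma ind_insert: "finite S \<Longrightarrow> v \<notin> S \<Longrightarrow> ind (insert v S) = e v + ind S"
  by (simp add: ind_def)

lemma lookup_pscale: "Poly_Mapping.lookup (pscale c p) m = c * Poly_Mapping.lookup p m"
  unfolding pscale_def mult_map_scale_conv_mult[symmetric]
  by (simp add: Poly_Mapping.map.rep_eq when_def)

lemma pscale_monom: "pscale c (monom m) = Poly_Mapping.single m c"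
  by (simp add: pscale_def monom_def mult_single)

lemma var_monom: "var v * monom m = monom (e v + m)"
  by (simp add: var_def monom_def e_def mult_single)

lemma monom_mult: "monom a * monom b = monom (a + b)"
  by (simp add: monom_def mult_single)

lemma poly_expand: "p = (\<Sum>m\<in>Poly_Mapping.keys p. pscale (Poly_Mapping.lookup p m) (monom m))"
  by (rule poly_mapping_eqI) (simp add: pscale_monom lookup_sum lookup_single when_def in_keys_iff)

lemma lookup_monom: "Poly_Mapping.lookup (monom m) k = (if m = k then 1 else 0)"
  by (simp add: monom_def lookup_single when_def)

lemma keys_monom: "Poly_Mapping.keys (monom m :: ('v,'k::comm_ring_1) mpoly) = {m}"
  by (simp add: monom_def)

lemma var_mult_shift: "Poly_Mapping.lookup (var v * p) (e v + k) = Poly_Mapping.lookup p k"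
proof -
  have "var v * p = (\<Sum>m\<in>Poly_Mapping.keys p. pscale (Poly_Mapping.lookup p m) (monom (e v + m)))"
    apply (subst poly_expand[of p])
    apply (simp add: sum_distrib_left)
    apply (rule sum.cong[OF refl])
    apply (simp add: pscale_def var_monom[symmetric] mult.left_commute)
    done
  then have "Poly_Mapping.lookup (var v * p) (e v + k) = (\<Sum>m\<in>Poly_Mapping.keys p. Poly_Mapping.lookup p m * (if m = k then 1 else 0))"
    by (simp add: lookup_sum lookup_pscale lookup_monom)
  also have "\<dots> = Poly_Mapping.lookup p k"
    by (simp add: in_keys_iff if_distrib cong: if_cong)
  finally show ?thesis .
qed

lemma var_mult_zero: "Poly_Mapping.lookup k v = 0 \<Longrightarrow> Poly_Mapping.lookup (var v * p) k = 0"
proof -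
  assume k: "Poly_Mapping.lookup k v = 0"
  have "var v * p = (\<Sum>m\<in>Poly_Mapping.keys p. pscale (Poly_Mapping.lookup p m) (monom (e v + m)))"
    apply (subst poly_expand[of p])
    apply (simp add: sum_distrib_left)
    apply (rule sum.cong[OF refl])
    apply (simp add: pscale_def var_monom[symmetric] mult.left_commute)
    done
  moreover have "e v + m \<noteq> k" for m
  proof
    assume "e v + m = k"
    then have "Poly_Mapping.lookup (e v + m) v = 0" using k by simp
    then show False by (simp add: lookup_add lookup_e)
  qed
  ultimately show ?thesis by (simp add: lookup_sum lookup_pscale lookup_monom)
qed


lemma ideal_gen_zero: "0 \<in> ideal_gen S"
  unfolding ideal_gen_def by (intro CollectI exI[of _ "{}"]) auto

lemma ideal_gen_mult: "g \<in> S \<Longrightarrow> c * g \<in> ideal_gen S"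
  unfolding ideal_gen_def by (intro CollectI exI[of _ "{g}"] exI[of _ "\<lambda>_. c"]) auto

lemma ideal_gen_add:
  assumes "p \<in> ideal_gen S" "q \<in> ideal_gen S" shows "p + q \<in> ideal_gen S"
proof -
  from assms obtain F1 c1 F2 c2 where 1: "finite F1" "F1 \<subseteq> S" "p = (\<Sum>g\<in>F1. c1 g * g)"
    and 2: "finite F2" "F2 \<subseteq> S" "q = (\<Sum>g\<in>F2. c2 g * g)"
    unfolding ideal_gen_def by blast
  define c where "c g = (if g \<in> F1 then c1 g else 0) + (if g \<in> F2 then c2 g else 0)" for g
  have "(\<Sum>g\<in>F1 \<union> F2. c g * g) = (\<Sum>g\<in>F1 \<union> F2. (if g \<in> F1 then c1 g * g else 0))
     + (\<Sum>g\<in>F1 \<union> F2. (if g \<in> F2 then c2 g * g else 0))"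
    unfolding sum.distrib[symmetric] by (rule sum.cong) (auto simp: c_def distrib_right)
  also have "\<dots> = p + q"
    using 1 2 by (simp add: sum.If_cases Int_absorb1 Int_absorb2)
  finally show ?thesis unfolding ideal_gen_def using 1 2
    by (intro CollectI exI[of _ "F1 \<union> F2"] exI[of _ c]) auto
qed

lemma ideal_gen_sum: "finite A \<Longrightarrow> (\<And>x. x \<in> A \<Longrightarrow> f x \<in> ideal_gen S) \<Longrightarrow> sum f A \<in> ideal_gen S"
  by (induction A rule: finite_induct) (auto intro: ideal_gen_add ideal_gen_zero)

lemma var_eq_monom: "var v = monom (e v)"
  by (simp add: var_def monom_def e_def)

lemma artin_ideal_eq: "artin_ideal W = ideal_gen ({monom (e v + e v) | v. True} \<union> {monom (e u + e v) | u v. W u v})"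
  unfolding artin_ideal_def var_eq_monom monom_mult ..

lemma J_iff: "p \<in> artin_ideal W \<longleftrightarrow> (\<forall>m\<in>Poly_Mapping.keys p. bad W m)"
proof
  assume "p \<in> artin_ideal W"
  then obtain F c where F: "finite F" "F \<subseteq> {monom (e v + e v) | v. True} \<union> {monom (e u + e v) | u v. W u v}"
     "p = (\<Sum>g\<in>F. c g * g)"
    unfolding artin_ideal_eq ideal_gen_def by blast
  show "\<forall>m\<in>Poly_Mapping.keys p. bad W m"
  proof
    fix m assume "m \<in> Poly_Mapping.keys p"
    then obtain g where g: "g \<in> F" "m \<in> Poly_Mapping.keys (c g * g)"
      using keys_sum[of "\<lambda>g. c g * g" F] F(3) by blast
    from g(1) F(2) obtain gm where gm: "g = monom gm" "(\<exists>v. gm = e v + e v) \<or> (\<exists>u v. W u v \<and> gm = e u + e v)"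
      by blast
    from g(2) keys_mult[of "c g" g] obtain a where "m = a + gm"
      unfolding gm(1) keys_monom by blast
    then show "bad W m" unfolding bad_def using gm(2) by (metis add.commute)
  qed
next
  assume B: "\<forall>m\<in>Poly_Mapping.keys p. bad W m"
  have "(\<Sum>m\<in>Poly_Mapping.keys p. pscale (Poly_Mapping.lookup p m) (monom m)) \<in> artin_ideal W"
    unfolding artin_ideal_eq
  proof (rule ideal_gen_sum)
    fix m assume "m \<in> Poly_Mapping.keys p"
    then obtain g r where gr: "m = g + r" "(\<exists>v. g = e v + e v) \<or> (\<exists>u v. W u v \<and> g = e u + e v)"
      using B unfolding bad_def by blast
    have "pscale (Poly_Mapping.lookup p m) (monom m) = Poly_Mapping.single r (Poly_Mapping.lookup p m) * monom g"
      unfolding pscale_monom by (simp add: monom_def mult_single gr(1) add.commute)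
    then show "pscale (Poly_Mapping.lookup p m) (monom m) \<in> ideal_gen ({monom (e v + e v) | v. True} \<union> {monom (e u + e v) | u v. W u v})"
      using gr(2) by (auto intro!: ideal_gen_mult)
  qed simp
  then show "p \<in> artin_ideal W" using poly_expand[of p] by simp
qed

lemma lookup_minus_nat: "Poly_Mapping.lookup (a - b :: 'v \<Rightarrow>\<^sub>0 nat) k = Poly_Mapping.lookup a k - Poly_Mapping.lookup b k"
  by (simp add: minus_poly_mapping.rep_eq)

lemma good_imp_not_bad:
  assumes irr: "\<And>u. \<not> W u u" and g: "good W m" shows "\<not> bad W m"
proof
  assume "bad W m"
  then obtain g r where gr: "m = g + r" "(\<exists>v. g = e v + e v) \<or> (\<exists>u v. W u v \<and> g = e u + e v)"
    unfolding bad_def by blast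
  from g obtain S where S: "finite S" "indep W S" "m = ind S" unfolding good_def by blast
  have le: "Poly_Mapping.lookup m v \<le> 1" for v using S by (simp add: lookup_ind)
  from gr(2) show False
  proof
    assume "\<exists>v. g = e v + e v"
    then obtain v where "g = e v + e v" by blast
    then have "Poly_Mapping.lookup m v \<ge> 2" using gr(1) by (simp add: lookup_add lookup_e)
    then show False using le[of v] by simp
  next
    assume "\<exists>u v. W u v \<and> g = e u + e v"
    then obtain u v where uv: "W u v" "g = e u + e v" by blast
    have "u \<noteq> v" using uv irr by blast
    have "Poly_Mapping.lookup m u \<ge> 1" "Poly_Mapping.lookup m v \<ge> 1" using gr(1) uv by (auto simp: lookup_add lookup_e)
    then have "u \<in> S" "v \<in> S" using S by (auto simp: lookup_ind split: if_splits)
    then show False using S(2) uv unfolding indep_def by blast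
  qed
qed

lemma not_good_imp_bad:
  assumes irr: "\<And>u. \<not> W u u" and ng: "\<not> good W m" shows "bad W m"
proof (cases "\<exists>v. Poly_Mapping.lookup m v \<ge> 2")
  case True
  then obtain v where v: "Poly_Mapping.lookup m v \<ge> 2" by blast
  have "m = (e v + e v) + (m - (e v + e v))"
  proof (rule poly_mapping_eqI)
    fix k show "Poly_Mapping.lookup m k = Poly_Mapping.lookup (e v + e v + (m - (e v + e v))) k"
      using v by (cases "v = k") (simp_all add: lookup_add lookup_e lookup_minus_nat)
  qed
  then show ?thesis unfolding bad_def by blast
next
  case False
  have le: "Poly_Mapping.lookup m v \<le> 1" for v
  proof -
    have "\<not> 2 \<le> Poly_Mapping.lookup m v" using False by blast
    then show ?thesis by linarith
  qed
  have mi: "m = ind (Poly_Mapping.keys m)"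
  proof (rule poly_mapping_eqI)
    fix k
    show "Poly_Mapping.lookup m k = Poly_Mapping.lookup (ind (Poly_Mapping.keys m)) k"
    proof (cases "Poly_Mapping.lookup m k = 0")
      case True then show ?thesis by (simp add: lookup_ind in_keys_iff)
    next
      case False
      then have "Poly_Mapping.lookup m k = 1" using le[of k] by linarith
      then show ?thesis using False by (simp add: lookup_ind in_keys_iff)
    qed
  qed
  then have "\<not> indep W (Poly_Mapping.keys m)" using ng finite_keys[of m] unfolding good_def by blast
  then obtain u v where uv: "u \<in> Poly_Mapping.keys m" "v \<in> Poly_Mapping.keys m" "W u v" unfolding indep_def by blast
  have uv': "u \<noteq> v" using irr uv(3) by blast
  have lu: "Poly_Mapping.lookup m u \<ge> 1" "Poly_Mapping.lookup m v \<ge> 1" using uv by (auto simp: in_keys_iff)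
  have "m = (e u + e v) + (m - (e u + e v))"
  proof (rule poly_mapping_eqI)
    fix k show "Poly_Mapping.lookup m k = Poly_Mapping.lookup (e u + e v + (m - (e u + e v))) k"
      using lu uv' by (cases "u = k"; cases "v = k") (simp_all add: lookup_add lookup_e lookup_minus_nat)
  qed
  then show ?thesis unfolding bad_def using uv(3) by blast
qed




interpretation VS: vector_space "pscale :: 'k::field \<Rightarrow> ('v,'k) mpoly \<Rightarrow> _"
  by (rule vector_space_pscale)

lemma mdeg_UNIV: "mdeg (m :: 'v::finite \<Rightarrow>\<^sub>0 nat) = (\<Sum>v\<in>UNIV. Poly_Mapping.lookup m v)"
  unfolding mdeg_def by (rule sum.mono_neutral_left) (auto simp: in_keys_iff)

lemma mdeg_add: "mdeg (a + b :: 'v::finite \<Rightarrow>\<^sub>0 nat) = mdeg a + mdeg b"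
  by (simp add: mdeg_UNIV lookup_add sum.distrib)

lemma mdeg_e: "mdeg (e v :: 'v::finite \<Rightarrow>\<^sub>0 nat) = 1"
  by (simp add: mdeg_UNIV lookup_e)

lemma mdeg_bound: "Poly_Mapping.lookup m v \<le> mdeg (m :: 'v::finite \<Rightarrow>\<^sub>0 nat)"
  unfolding mdeg_UNIV by (rule member_le_sum) auto

lemma finite_Md: "finite {m :: 'v::finite \<Rightarrow>\<^sub>0 nat. mdeg m = d}"
proof -
  have "Poly_Mapping.lookup ` {m :: 'v \<Rightarrow>\<^sub>0 nat. mdeg m = d} \<subseteq> {f. \<forall>v. f v \<in> {0..d}}"
    using mdeg_bound by fastforce
  moreover have "finite {f :: 'v \<Rightarrow> nat. \<forall>v. f v \<in> {0..d}}"
    using finite_set_of_finite_funs[of "UNIV :: 'v set" "{0..d}"] by simp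
  ultimately have "finite (Poly_Mapping.lookup ` {m :: 'v \<Rightarrow>\<^sub>0 nat. mdeg m = d})" by (rule finite_subset)
  moreover have "inj_on Poly_Mapping.lookup {m :: 'v \<Rightarrow>\<^sub>0 nat. mdeg m = d}"
    by (rule inj_onI) (simp add: poly_mapping_eqI)
  ultimately show ?thesis by (rule finite_imageD)
qed

lemma monom_inj: "inj (monom :: ('v \<Rightarrow>\<^sub>0 nat) \<Rightarrow> ('v, 'k::comm_ring_1) mpoly)"
  by (rule injI) (metis keys_monom singleton_inject)

lemma monom_in_homog: "(monom m :: ('v, 'k::comm_ring_1) mpoly) \<in> homog d \<longleftrightarrow> mdeg m = d"
  by (simp add: homog_def keys_monom)

lemma subspace_homog: "VS.subspace (homog d :: ('v, 'k::field) mpoly set)"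
proof (rule VS.subspaceI)
  show "0 \<in> (homog d :: ('v, 'k) mpoly set)" by (simp add: homog_def)
next
  fix x y :: "('v, 'k) mpoly" assume "x \<in> homog d" "y \<in> homog d"
  then show "x + y \<in> homog d" using keys_add[of x y] by (auto simp: homog_def)
next
  fix c :: 'k and x :: "('v, 'k) mpoly" assume "x \<in> homog d"
  moreover have "Poly_Mapping.keys (pscale c x) \<subseteq> Poly_Mapping.keys x" by (auto simp: in_keys_iff lookup_pscale)
  ultimately show "pscale c x \<in> homog d" by (auto simp: homog_def)
qed

lemma subspace_J: "VS.subspace (artin_ideal W :: ('v, 'k::field) mpoly set)"
proof (rule VS.subspaceI)
  show "0 \<in> (artin_ideal W :: ('v, 'k) mpoly set)" by (simp add: J_iff)
next
  fix x y :: "('v, 'k) mpoly" assume "x \<in> artin_ideal W" "y \<in> artin_ideal W"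
  then show "x + y \<in> artin_ideal W" using keys_add[of x y] by (auto simp: J_iff)
next
  fix c :: 'k and x :: "('v, 'k) mpoly" assume "x \<in> artin_ideal W"
  moreover have "Poly_Mapping.keys (pscale c x) \<subseteq> Poly_Mapping.keys x" by (auto simp: in_keys_iff lookup_pscale)
  ultimately show "pscale c x \<in> artin_ideal W" by (auto simp: J_iff)
qed

lemma independent_monos: "VS.independent (monom ` X :: ('v, 'k::field) mpoly set)"
proof
  assume "VS.dependent (monom ` X :: ('v, 'k) mpoly set)"
  then obtain m where m: "m \<in> X" "monom m \<in> VS.span (monom ` X - {monom m} :: ('v, 'k) mpoly set)"
    unfolding VS.dependent_def by blast
  have "VS.span (monom ` X - {monom m} :: ('v, 'k) mpoly set) \<subseteq> {p. Poly_Mapping.lookup p m = 0}"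
  proof (rule VS.span_minimal)
    show "monom ` X - {monom m} \<subseteq> {p :: ('v, 'k) mpoly. Poly_Mapping.lookup p m = 0}"
      by (auto simp: lookup_monom)
    show "VS.subspace {p :: ('v, 'k) mpoly. Poly_Mapping.lookup p m = 0}"
      by (rule VS.subspaceI) (auto simp: lookup_add lookup_pscale)
  qed
  with m show False by (auto simp: lookup_monom)
qed

lemma in_span_monos: "(\<And>m. m \<in> Poly_Mapping.keys p \<Longrightarrow> m \<in> X) \<Longrightarrow> p \<in> VS.span (monom ` X :: ('v, 'k::field) mpoly set)"
  apply (subst poly_expand[of p])
  apply (rule VS.span_sum)
  apply (rule VS.span_scale)
  apply (rule VS.span_base)
  apply auto
  done

lemma dim_homog: "VS.dim (homog d :: ('v::finite, 'k::field) mpoly set) = card {m :: 'v \<Rightarrow>\<^sub>0 nat. mdeg m = d}"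
proof -
  have "card (monom ` {m. mdeg m = d} :: ('v, 'k) mpoly set) = VS.dim (homog d :: ('v, 'k) mpoly set)"
  proof (rule VS.basis_card_eq_dim)
    show "monom ` {m. mdeg m = d} \<subseteq> (homog d :: ('v, 'k) mpoly set)" by (auto simp: monom_in_homog)
    show "homog d \<subseteq> VS.span (monom ` {m. mdeg m = d} :: ('v, 'k) mpoly set)"
      by (auto simp: homog_def intro!: in_span_monos)
    show "VS.independent (monom ` {m. mdeg m = d} :: ('v, 'k) mpoly set)" by (rule independent_monos)
  qed
  moreover have "card (monom ` {m. mdeg m = d} :: ('v, 'k) mpoly set) = card {m :: 'v \<Rightarrow>\<^sub>0 nat. mdeg m = d}"
    by (meson card_image inj_on_subset monom_inj subset_UNIV)
  ultimately show ?thesis by simp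
qed

lemma dim_J: "VS.dim (artin_ideal W \<inter> homog d :: ('v::finite, 'k::field) mpoly set) = card {m :: 'v \<Rightarrow>\<^sub>0 nat. mdeg m = d \<and> bad W m}"
proof -
  have "card (monom ` {m. mdeg m = d \<and> bad W m} :: ('v, 'k) mpoly set) = VS.dim (artin_ideal W \<inter> homog d :: ('v, 'k) mpoly set)"
  proof (rule VS.basis_card_eq_dim)
    show "monom ` {m. mdeg m = d \<and> bad W m} \<subseteq> (artin_ideal W \<inter> homog d :: ('v, 'k) mpoly set)"
      by (auto simp: monom_in_homog J_iff keys_monom)
    show "artin_ideal W \<inter> homog d \<subseteq> VS.span (monom ` {m. mdeg m = d \<and> bad W m} :: ('v, 'k) mpoly set)"
      by (auto simp: homog_def J_iff intro!: in_span_monos)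
    show "VS.independent (monom ` {m. mdeg m = d \<and> bad W m} :: ('v, 'k) mpoly set)" by (rule independent_monos)
  qed
  moreover have "card (monom ` {m. mdeg m = d \<and> bad W m} :: ('v, 'k) mpoly set) = card {m :: 'v \<Rightarrow>\<^sub>0 nat. mdeg m = d \<and> bad W m}"
    by (meson card_image inj_on_subset monom_inj subset_UNIV)
  ultimately show ?thesis by simp
qed

lemma artin_dim_eq:
  assumes irr: "\<And>u. \<not> W u u"
  shows "artin_dim W d (K :: 'k::field itself) = card {m :: 'v::finite \<Rightarrow>\<^sub>0 nat. mdeg m = d \<and> good W m}"
proof -
  have "artin_dim W d K = card {m :: 'v \<Rightarrow>\<^sub>0 nat. mdeg m = d} - card {m :: 'v \<Rightarrow>\<^sub>0 nat. mdeg m = d \<and> bad W m}"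
    by (simp only: artin_dim_def dim_homog dim_J)
  also have "\<dots> = card ({m :: 'v \<Rightarrow>\<^sub>0 nat. mdeg m = d} - {m. mdeg m = d \<and> bad W m})"
    by (rule card_Diff_subset[symmetric]) (auto intro: finite_subset[OF _ finite_Md])
  also have "{m :: 'v \<Rightarrow>\<^sub>0 nat. mdeg m = d} - {m. mdeg m = d \<and> bad W m} = {m. mdeg m = d \<and> good W m}"
    using good_imp_not_bad[of W, OF irr] not_good_imp_bad[of W, OF irr] by blast
  finally show ?thesis .
qed




definition pr :: "('v \<Rightarrow> 'v \<Rightarrow> bool) \<Rightarrow> ('v, 'k::comm_ring_1) mpoly \<Rightarrow> ('v, 'k) mpoly" where
  "pr W p = (\<Sum>m\<in>{m\<in>Poly_Mapping.keys p. good W m}. pscale (Poly_Mapping.lookup p m) (monom m))"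

lemma lookup_pr: "Poly_Mapping.lookup (pr W p) k = (if good W k then Poly_Mapping.lookup p k else 0)"
proof -
  have "Poly_Mapping.lookup (pr W p) k = (\<Sum>m\<in>{m\<in>Poly_Mapping.keys p. good W m}. (if m = k then Poly_Mapping.lookup p m else 0))"
    unfolding pr_def by (simp add: lookup_sum lookup_pscale lookup_monom if_distrib cong: if_cong)
  also have "\<dots> = (if good W k then Poly_Mapping.lookup p k else 0)"
    by (simp add: in_keys_iff)
  finally show ?thesis .
qed

lemma pr_add: "pr W (p + q) = pr W p + pr W q"
  by (rule poly_mapping_eqI) (simp add: lookup_pr lookup_add)
lemma pr_diff: "pr W (p - q) = pr W p - (pr W q :: ('v, 'k::comm_ring_1) mpoly)"
  by (rule poly_mapping_eqI) (simp add: lookup_pr lookup_minus)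
lemma pr_scale: "pr W (pscale c p) = pscale c (pr W p)"
  by (rule poly_mapping_eqI) (simp add: lookup_pr lookup_pscale)
lemma pr_pr: "pr W (pr W p) = pr W p"
  by (rule poly_mapping_eqI) (simp add: lookup_pr)
lemma pr_zero[simp]: "pr W 0 = 0"
  by (rule poly_mapping_eqI) (simp add: lookup_pr)
lemma keys_pr: "Poly_Mapping.keys (pr W p) = {m\<in>Poly_Mapping.keys p. good W m}"
  by (auto simp: in_keys_iff lookup_pr split: if_splits)
lemma pr_fix: "(\<And>m. m \<in> Poly_Mapping.keys p \<Longrightarrow> good W m) \<Longrightarrow> pr W p = p"
  by (rule poly_mapping_eqI) (auto simp: lookup_pr in_keys_iff)
lemma pr_eq_0_iff:
  assumes irr: "\<And>u. \<not> W u u"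
  shows "pr W p = 0 \<longleftrightarrow> p \<in> artin_ideal W"
proof -
  have "pr W p = 0 \<longleftrightarrow> Poly_Mapping.keys (pr W p) = {}" by simp
  also have "\<dots> \<longleftrightarrow> (\<forall>m\<in>Poly_Mapping.keys p. \<not> good W m)" by (auto simp: keys_pr)
  also have "\<dots> \<longleftrightarrow> (\<forall>m\<in>Poly_Mapping.keys p. bad W m)"
    using good_imp_not_bad[of W, OF irr] not_good_imp_bad[of W, OF irr] by blast
  finally show ?thesis by (simp add: J_iff)
qed
lemma pr_homog: "p \<in> homog d \<Longrightarrow> pr W p \<in> homog d"
  by (auto simp: homog_def keys_pr)

lemma linear_pr: "Vector_Spaces.linear pscale pscale (pr W :: ('v, 'k::field) mpoly \<Rightarrow> _)"
  unfolding Vector_Spaces.linear_iff using vector_space_pscale[where 'k='k and 'v='v] by (simp add: pr_add pr_scale)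

lemma indep_union_proj:
  fixes f :: "('v, 'k::field) mpoly \<Rightarrow> ('v, 'k) mpoly"
  assumes add: "\<And>x y. f (x + y) = f x + f y" and sc: "\<And>c x. f (pscale c x) = pscale c (f x)"
    and B1: "VS.independent B1" and B2: "VS.independent B2"
    and f1: "\<And>b. b \<in> B1 \<Longrightarrow> f b = b" and f2: "\<And>b. b \<in> B2 \<Longrightarrow> f b = 0"
  shows "VS.independent (B1 \<union> B2)"
proof
  have f0: "f 0 = 0" using add[of 0 0] by simp
  have sub1: "VS.subspace {x. f x = x}"
    by (rule VS.subspaceI) (simp_all add: f0 add sc)
  have sub2: "VS.subspace {x. f x = 0}"
    by (rule VS.subspaceI) (simp_all add: f0 add sc)
  have S1: "VS.span B1 \<subseteq> {x. f x = x}"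
    by (rule VS.span_minimal[OF _ sub1]) (use f1 in blast)
  have S2: "VS.span B2 \<subseteq> {x. f x = 0}"
    by (rule VS.span_minimal[OF _ sub2]) (use f2 in blast)
  assume "VS.dependent (B1 \<union> B2)"
  then obtain a where a: "a \<in> B1 \<union> B2" "a \<in> VS.span (B1 \<union> B2 - {a})"
    unfolding VS.dependent_def by blast
  have "B1 \<union> B2 - {a} = (B1 - {a}) \<union> (B2 - {a})" by blast
  with a(2) have "a \<in> VS.span ((B1 - {a}) \<union> (B2 - {a}))" by simp
  then obtain x y where xy: "a = x + y" "x \<in> VS.span (B1 - {a})" "y \<in> VS.span (B2 - {a})"
    unfolding VS.span_Un by blast
  have "x \<in> VS.span B1" using VS.span_mono[of "B1 - {a}" B1] xy(2) by blast
  then have fx: "f x = x" using S1 by blast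
  have "y \<in> VS.span B2" using VS.span_mono[of "B2 - {a}" B2] xy(3) by blast
  then have fy: "f y = 0" using S2 by blast
  show False
  proof (cases "a \<in> B1")
    case True
    have "f a = x" using xy(1) add[of x y] fx fy by simp
    then have "a = x" using f1[OF True] by simp
    then have "VS.dependent B1" unfolding VS.dependent_def using True xy(2) by auto
    then show False using B1 by simp
  next
    case False
    then have aB2: "a \<in> B2" using a(1) by blast
    have "f a = x" using xy(1) add[of x y] fx fy by simp
    then have "x = 0" using f2[OF aB2] by simp
    then have "a = y" using xy(1) by simp
    then have "VS.dependent B2" unfolding VS.dependent_def using aB2 xy(3) by auto
    then show False using B2 by simp
  qed
qed

lemma J_span: "artin_ideal W \<inter> homog d \<subseteq> VS.span (monom ` {m. mdeg m = d \<and> bad W m} :: ('v, 'k::field) mpoly set)"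
  by (auto simp: homog_def J_iff intro!: in_span_monos)
lemma Bd_sub: "monom ` {m. mdeg m = d \<and> bad W m} \<subseteq> (artin_ideal W \<inter> homog d :: ('v, 'k::field) mpoly set)"
  by (auto simp: monom_in_homog J_iff keys_monom)

lemma rank_eq:
  fixes f :: "('v::finite, 'k::field) mpoly"
  assumes irr: "\<And>u. \<not> W u u" and hom: "\<And>p. p \<in> homog i \<Longrightarrow> f * p \<in> homog (Suc i)"
  shows "artin_mult_rank W f i = VS.dim (pr W ` (\<lambda>p. f * p) ` homog i)"
proof -
  define P where "P = pr W ` (\<lambda>p. f * p) ` homog i"
  define J' where "J' = artin_ideal W \<inter> (homog (Suc i) :: ('v, 'k) mpoly set)"
  define Bd where "Bd = (monom ` {m. mdeg m = Suc i \<and> bad W m} :: ('v, 'k) mpoly set)"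
  define G' where "G' = (monom ` {m. mdeg m = Suc i \<and> good W m} :: ('v, 'k) mpoly set)"
  have finG': "finite G'" unfolding G'_def by (rule finite_imageI) (rule finite_subset[OF _ finite_Md], auto)
  have PG: "P \<subseteq> VS.span G'"
  proof
    fix x assume "x \<in> P"
    then obtain p where p: "p \<in> homog i" "x = pr W (f * p)" unfolding P_def by blast
    have "f * p \<in> homog (Suc i)" using hom p(1) .
    then show "x \<in> VS.span G'" unfolding G'_def p(2)
      by (intro in_span_monos) (auto simp: keys_pr homog_def)
  qed
  have sPG: "VS.span P \<subseteq> VS.span G'" using PG by (rule VS.span_minimal) simp
  obtain B1 where B1: "B1 \<subseteq> VS.span P" "VS.independent B1" "VS.span P \<subseteq> VS.span B1" "card B1 = VS.dim (VS.span P)"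
    by (rule VS.basis_exists)
  have finB1: "finite B1" using VS.independent_span_bound[OF finG' B1(2)] B1(1) sPG by blast
  have fixG: "VS.span G' \<subseteq> {x. pr W x = x}"
  proof (rule VS.span_minimal)
    show "G' \<subseteq> {x. pr W x = x}" by (auto simp: G'_def keys_monom intro!: pr_fix)
    show "VS.subspace {x. pr W x = x}" by (rule VS.subspaceI) (simp_all add: pr_add pr_scale)
  qed
  have B1fix: "\<And>b. b \<in> B1 \<Longrightarrow> pr W b = b" using B1(1) sPG fixG by blast
  have BdJ': "Bd \<subseteq> J'" unfolding J'_def Bd_def by (rule Bd_sub)
  have Bd0: "pr W b = 0" if "b \<in> Bd" for b
  proof -
    have "b \<in> J'" using BdJ' that by (rule subsetD)
    then have "b \<in> artin_ideal W" unfolding J'_def by (rule IntD1)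
    then show ?thesis using pr_eq_0_iff[of W b, OF irr] by simp
  qed
  have indBd: "VS.independent Bd" unfolding Bd_def by (rule independent_monos)
  have ind: "VS.independent (B1 \<union> Bd)"
    by (rule indep_union_proj[OF pr_add pr_scale B1(2) indBd B1fix Bd0])
  have disj: "B1 \<inter> Bd = {}"
  proof (rule ccontr)
    assume "B1 \<inter> Bd \<noteq> {}"
    then obtain b where "b \<in> B1" "b \<in> Bd" by blast
    then have "b = 0" using B1fix Bd0 by metis
    then show False using \<open>b \<in> B1\<close> B1(2) VS.dependent_zero by blast
  qed
  have finBd: "finite Bd" unfolding Bd_def by (rule finite_imageI) (rule finite_subset[OF _ finite_Md], auto)
  have J'Bd: "J' \<subseteq> VS.span Bd" unfolding J'_def Bd_def by (rule J_span)
  have span_eq: "VS.span ((\<lambda>p. f * p) ` homog i \<union> J') = VS.span (B1 \<union> Bd)"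
  proof -
    have a: "(\<lambda>p. f * p) ` homog i \<union> J' \<subseteq> VS.span (B1 \<union> Bd)"
    proof
      fix x assume "x \<in> (\<lambda>p. f * p) ` homog i \<union> J'"
      then show "x \<in> VS.span (B1 \<union> Bd)"
      proof
        assume "x \<in> (\<lambda>p. f * p) ` homog i"
        then obtain p where p: "p \<in> homog i" "x = f * p" by blast
        have xh: "x \<in> homog (Suc i)" using hom p by simp
        have "pr W x \<in> P" unfolding P_def using p by blast
        then have 1: "pr W x \<in> VS.span (B1 \<union> Bd)"
          using B1(3) VS.span_superset[of P] VS.span_mono[of B1 "B1 \<union> Bd"] by blast
        have "x - pr W x \<in> J'" unfolding J'_def
          using pr_eq_0_iff[of W "x - pr W x", OF irr] pr_diff[of W x "pr W x"] pr_pr[of W x]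
            VS.subspace_diff[OF subspace_homog xh pr_homog[OF xh]] by auto
        then have 2: "x - pr W x \<in> VS.span (B1 \<union> Bd)"
          using J'Bd VS.span_mono[of Bd "B1 \<union> Bd"] by blast
        have "x = pr W x + (x - pr W x)" by simp
        then show ?thesis using VS.span_add[OF 1 2] by simp
      next
        assume "x \<in> J'"
        then show ?thesis using J'Bd VS.span_mono[of Bd "B1 \<union> Bd"] by blast
      qed
    qed
    have b: "B1 \<union> Bd \<subseteq> VS.span ((\<lambda>p. f * p) ` homog i \<union> J')"
    proof -
      have "P \<subseteq> VS.span ((\<lambda>p. f * p) ` homog i \<union> J')"
      proof
        fix y assume "y \<in> P"
        then obtain p where p: "p \<in> homog i" "y = pr W (f * p)" unfolding P_def by blast
        define x where "x = f * p"
        have xh: "x \<in> homog (Suc i)" using hom p x_def by simp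
        have "x - pr W x \<in> J'" unfolding J'_def
          using pr_eq_0_iff[of W "x - pr W x", OF irr] pr_diff[of W x "pr W x"] pr_pr[of W x]
            VS.subspace_diff[OF subspace_homog xh pr_homog[OF xh]] by auto
        then have 2: "x - pr W x \<in> VS.span ((\<lambda>p. f * p) ` homog i \<union> J')" by (auto intro: VS.span_base)
        have 1: "x \<in> VS.span ((\<lambda>p. f * p) ` homog i \<union> J')" using p unfolding x_def by (auto intro: VS.span_base)
        have "y = x - (x - pr W x)" using p x_def by simp
        then show "y \<in> VS.span ((\<lambda>p. f * p) ` homog i \<union> J')" using VS.span_diff[OF 1 2] by simp
      qed
      then have "VS.span P \<subseteq> VS.span ((\<lambda>p. f * p) ` homog i \<union> J')" by (rule VS.span_minimal) simp
      then have "B1 \<subseteq> VS.span ((\<lambda>p. f * p) ` homog i \<union> J')" using B1(1) by blast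
      moreover have "Bd \<subseteq> VS.span ((\<lambda>p. f * p) ` homog i \<union> J')" using BdJ' by (auto intro: VS.span_base)
      ultimately show ?thesis by blast
    qed
    show ?thesis unfolding VS.span_eq using a b by (rule conjI)
  qed
  have "VS.dim ((\<lambda>p. f * p) ` homog i \<union> J') = card (B1 \<union> Bd)"
    using VS.span_eq_dim[OF span_eq] VS.dim_eq_card_independent[OF ind] by simp
  also have "\<dots> = card B1 + card Bd" using card_Un_disjoint[OF finB1 finBd disj] .
  finally have 1: "VS.dim ((\<lambda>p. f * p) ` homog i \<union> J') = card B1 + card Bd" .
  have 2: "VS.dim J' = card Bd"
    using VS.basis_card_eq_dim[OF BdJ' J'Bd indBd] by simp
  have "artin_mult_rank W f i = card B1" unfolding artin_mult_rank_def
    using 1 2 unfolding J'_def by simp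
  also have "\<dots> = VS.dim P" using B1(4) by simp
  finally show ?thesis unfolding P_def .
qed




lemma good_ind: "finite S \<Longrightarrow> good W (ind S) \<longleftrightarrow> indep W S"
  unfolding good_def using ind_inj by blast

lemma good_le1: "good W m \<Longrightarrow> Poly_Mapping.lookup m v \<le> 1"
  unfolding good_def by (auto simp: lookup_ind)

lemma bad_add: "bad W b \<Longrightarrow> bad W (a + b)"
  unfolding bad_def by (metis add.commute add.left_commute)

lemma L_mult_homog:
  fixes p :: "('v::finite, 'k::comm_ring_1) mpoly"
  assumes "p \<in> homog i"
  shows "(\<Sum>v\<in>UNIV. var v) * p \<in> homog (Suc i)"
proof -
  have "Poly_Mapping.keys ((\<Sum>v\<in>UNIV. var v) * p) \<subseteq> (\<Union>v\<in>UNIV. Poly_Mapping.keys (var v * p))"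
    unfolding sum_distrib_right by (rule keys_sum)
  moreover have "Poly_Mapping.keys (var v * p) \<subseteq> {e v + m | m. m \<in> Poly_Mapping.keys p}" for v
    using keys_mult[of "var v" p] by (auto simp: var_eq_monom keys_monom)
  ultimately show ?thesis unfolding homog_def
  proof (intro CollectI ballI)
    fix m assume A: "Poly_Mapping.keys ((\<Sum>v\<in>UNIV. var v) * p) \<subseteq> (\<Union>v\<in>UNIV. Poly_Mapping.keys (var v * p))"
      and B: "\<And>v. Poly_Mapping.keys (var v * p) \<subseteq> {e v + m | m. m \<in> Poly_Mapping.keys p}"
      and m: "m \<in> Poly_Mapping.keys ((\<Sum>v\<in>UNIV. var v) * p)"
    from A m obtain v where "m \<in> Poly_Mapping.keys (var v * p)" by blast
    with B obtain m' where "m = e v + m'" "m' \<in> Poly_Mapping.keys p" by blast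
    then show "mdeg m = Suc i" using assms by (simp add: homog_def mdeg_add mdeg_e)
  qed
qed

lemma lookup_L_ind:
  fixes p :: "('v::finite, 'k::comm_ring_1) mpoly"
  shows "Poly_Mapping.lookup ((\<Sum>v\<in>UNIV. var v) * p) (ind T) = (\<Sum>v\<in>T. Poly_Mapping.lookup p (ind (T - {v})))"
proof -
  have fT: "finite T" by simp
  have "Poly_Mapping.lookup ((\<Sum>v\<in>UNIV. var v) * p) (ind T) = (\<Sum>v\<in>UNIV. Poly_Mapping.lookup (var v * p) (ind T))"
    by (simp add: sum_distrib_right lookup_sum)
  also have "\<dots> = (\<Sum>v\<in>UNIV. if v \<in> T then Poly_Mapping.lookup p (ind (T - {v})) else 0)"
  proof (rule sum.cong[OF refl])
    fix v
    show "Poly_Mapping.lookup (var v * p) (ind T) = (if v \<in> T then Poly_Mapping.lookup p (ind (T - {v})) else 0)"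
    proof (cases "v \<in> T")
      case True
      then have "ind T = e v + ind (T - {v})"
        using ind_insert[of "T - {v}" v] by (simp add: insert_absorb)
      then show ?thesis using True by (simp add: var_mult_shift)
    next
      case False
      then show ?thesis by (simp add: var_mult_zero lookup_ind)
    qed
  qed
  also have "\<dots> = (\<Sum>v\<in>T. Poly_Mapping.lookup p (ind (T - {v})))"
    by (simp add: sum.If_cases)
  finally show ?thesis .
qed

lemma pr_monom: "pr W (monom m :: ('v, 'k::comm_ring_1) mpoly) = (if good W m then monom m else 0)"
  by (rule poly_mapping_eqI) (simp add: lookup_pr lookup_monom)

lemma L_monom: "(\<Sum>v\<in>UNIV. var v) * (monom m :: ('v, 'k::comm_ring_1) mpoly) = (\<Sum>v\<in>UNIV. monom (e v + m))"
  by (simp add: sum_distrib_right var_monom)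

lemma pr_L_monom_bad:
  assumes irr: "\<And>u. \<not> W u u" and b: "bad W m"
  shows "pr W ((\<Sum>v\<in>UNIV. var v) * (monom m :: ('v::finite, 'k::comm_ring_1) mpoly)) = 0"
proof -
  have "pr W ((\<Sum>v\<in>UNIV. var v) * (monom m :: ('v, 'k) mpoly)) = (\<Sum>v\<in>UNIV. pr W (monom (e v + m)))"
    unfolding L_monom by (induction rule: infinite_finite_induct) (simp_all add: pr_add)
  also have "\<dots> = 0"
  proof (rule sum.neutral, rule ballI)
    fix v
    have "\<not> good W (e v + m)" using bad_add[OF b] good_imp_not_bad[of W, OF irr] by blast
    then show "pr W (monom (e v + m) :: ('v, 'k) mpoly) = 0" by (simp add: pr_monom)
  qed
  finally show ?thesis .
qed

lemma pr_sum: "pr W (sum f A) = (\<Sum>x\<in>A. pr W (f x))"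
  by (induction A rule: infinite_finite_induct) (simp_all add: pr_add)




lemma whisker_irrefl: "(\<And>u. \<not> E u u) \<Longrightarrow> \<not> whisker E v v"
  by (cases v) auto

lemma CL1:
  fixes f :: "('a::finite + 'a) set \<Rightarrow> 'k::field_char_0" and E :: "'a \<Rightarrow> 'a \<Rightarrow> bool"
  assumes supp: "\<And>S. f S \<noteq> 0 \<Longrightarrow> card S = i"
    and hyp: "\<And>T. indep (whisker E) T \<Longrightarrow> (\<Sum>v\<in>T. f (T - {v})) = 0"
    and small: "2 * i < card (UNIV :: 'a set)"
    and S: "indep (whisker E) S"
  shows "f S = 0"
proof (rule ccontr)
  assume fS: "f S \<noteq> 0"
  define xc where "xc S = card (S \<inter> range Inl)" for S :: "('a + 'a) set"
  obtain S0 where S0: "indep (whisker E) S0 \<and> f S0 \<noteq> 0"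
    and min: "\<And>S'. indep (whisker E) S' \<and> f S' \<noteq> 0 \<Longrightarrow> xc S0 \<le> xc S'"
    using ex_has_least_nat[of "\<lambda>S. indep (whisker E) S \<and> f S \<noteq> 0" S xc] S fS by blast
  define Xs where "Xs = {a. Inl a \<in> S0}"
  define Ys where "Ys = {a. Inr a \<in> S0}"
  define X0 where "X0 = (Inl ` Xs :: ('a + 'a) set)"
  define N where "N = UNIV - Xs"
  define s where "s = card Xs"
  have S0eq: "S0 = X0 \<union> Inr ` Ys"
    unfolding X0_def Xs_def Ys_def by (auto, metis sum.exhaust image_eqI mem_Collect_eq)
  have YsN: "Ys \<subseteq> N"
  proof
    fix a assume "a \<in> Ys"
    then have "Inr a \<in> S0" unfolding Ys_def by simp
    moreover have "whisker E (Inl a) (Inr a)" by simp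
    ultimately have "Inl a \<notin> S0" using S0 unfolding indep_def by blast
    then show "a \<in> N" unfolding N_def Xs_def by simp
  qed
  have xcS0: "xc S0 = s"
  proof -
    have "S0 \<inter> range Inl = X0" unfolding S0eq X0_def by auto
    then show ?thesis unfolding xc_def s_def X0_def by (simp add: card_image)
  qed
  have cardS0: "card S0 = i" using supp S0 by blast
  have disjXY: "X0 \<inter> Inr ` T = {}" for T unfolding X0_def by auto
  have cardXT: "card (X0 \<union> Inr ` T) = s + card T" for T
    using card_Un_disjoint[OF _ _ disjXY[of T]] by (simp add: X0_def s_def card_image)
  have si: "s \<le> i" using cardXT[of Ys] cardS0 S0eq by simp
  have cardN: "card N = card (UNIV :: 'a set) - s"
    unfolding N_def s_def by (simp add: card_Diff_subset)
  define g where "g T = (if T \<subseteq> N then f (X0 \<union> Inr ` T) else 0)" for T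
  have "g Ys = 0"
  proof (rule boolean_inj[of N "i - s" g])
    show "finite N" by simp
    show "2 * (i - s) < card N" using small si cardN by linarith
    show "\<forall>T. g T \<noteq> 0 \<longrightarrow> T \<subseteq> N \<and> card T = i - s"
    proof (intro allI impI)
      fix T assume "g T \<noteq> 0"
      then have "T \<subseteq> N" "f (X0 \<union> Inr ` T) \<noteq> 0" unfolding g_def by (auto split: if_splits)
      then show "T \<subseteq> N \<and> card T = i - s" using supp cardXT[of T] by fastforce
    qed
    show "\<forall>T. T \<subseteq> N \<longrightarrow> (\<Sum>t\<in>T. g (T - {t})) = 0"
    proof (intro allI impI)
      fix T' assume T'N: "T' \<subseteq> N"
      define T where "T = X0 \<union> Inr ` T'"
      have indT: "indep (whisker E) T"
        unfolding indep_def
      proof (intro ballI)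
        fix u v assume u: "u \<in> T" and v: "v \<in> T"
        show "\<not> whisker E u v"
        proof (cases u; cases v)
          fix a b assume ab: "u = Inl a" "v = Inl b"
          then have "u \<in> S0" "v \<in> S0" using u v unfolding T_def X0_def Xs_def by auto
          then show ?thesis using S0 unfolding indep_def by blast
        next
          fix a b assume ab: "u = Inl a" "v = Inr b"
          then have "a \<in> Xs" "b \<in> N" using u v T'N unfolding T_def X0_def by auto
          then show ?thesis using ab unfolding N_def by auto
        next
          fix a b assume ab: "u = Inr a" "v = Inl b"
          then have "b \<in> Xs" "a \<in> N" using u v T'N unfolding T_def X0_def by auto
          then show ?thesis using ab unfolding N_def by auto
        next
          fix a b assume ab: "u = Inr a" "v = Inr b"
          then show ?thesis by simp
        qed
      qed
      have "0 = (\<Sum>v\<in>T. f (T - {v}))" using hyp[OF indT] by simp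
      also have "\<dots> = (\<Sum>v\<in>X0. f (T - {v})) + (\<Sum>v\<in>Inr ` T'. f (T - {v}))"
        unfolding T_def by (rule sum.union_disjoint) (auto simp: X0_def)
      also have "(\<Sum>v\<in>X0. f (T - {v})) = 0"
      proof (rule sum.neutral, rule ballI)
        fix v assume vX: "v \<in> X0"
        show "f (T - {v}) = 0"
        proof (rule ccontr)
          assume nz: "f (T - {v}) \<noteq> 0"
          have "indep (whisker E) (T - {v})" using indT unfolding indep_def by blast
          then have "xc S0 \<le> xc (T - {v})" using min nz by blast
          moreover have "(T - {v}) \<inter> range Inl = X0 - {v}" unfolding T_def X0_def by auto
          moreover have "card (X0 - {v}) < s" using vX unfolding s_def X0_def
            by (metis card_Diff1_less card_image finite inj_Inl inj_on_subset subset_UNIV)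
          ultimately show False using xcS0 unfolding xc_def by simp
        qed
      qed
      also have "(\<Sum>v\<in>Inr ` T'. f (T - {v})) = (\<Sum>t\<in>T'. f (T - {Inr t}))"
        using sum.reindex[of Inr T' "\<lambda>v. f (T - {v})"] by (simp add: inj_on_def)
      also have "\<dots> = (\<Sum>t\<in>T'. g (T' - {t}))"
      proof (rule sum.cong[OF refl])
        fix t assume "t \<in> T'"
        have "T - {Inr t} = X0 \<union> Inr ` (T' - {t})" unfolding T_def X0_def by auto
        moreover have "T' - {t} \<subseteq> N" using T'N by blast
        ultimately show "f (T - {Inr t}) = g (T' - {t})" unfolding g_def by simp
      qed
      finally show "(\<Sum>t\<in>T'. g (T' - {t})) = 0" by simp
    qed
  qed
  moreover have "g Ys = f S0" unfolding g_def using YsN S0eq by simp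
  ultimately show False using S0 by simp
qed




lemma inj_main:
  fixes E :: "'a::finite \<Rightarrow> 'a \<Rightarrow> bool" and p :: "('a + 'a, 'k::field_char_0) mpoly"
  assumes irr: "\<And>u. \<not> E u u" and small: "2 * i < card (UNIV :: 'a set)"
    and p: "p \<in> homog i" and Lp: "(\<Sum>v\<in>UNIV. var v) * p \<in> artin_ideal (whisker E)"
  shows "p \<in> artin_ideal (whisker E)"
proof -
  have irrW: "\<And>u. \<not> whisker E u u" using whisker_irrefl[of E, OF irr] by blast
  define f where "f S = Poly_Mapping.lookup p (ind S)" for S :: "('a + 'a) set"
  have supp: "card S = i" if "f S \<noteq> 0" for S
  proof -
    have "ind S \<in> Poly_Mapping.keys p" using that unfolding f_def by (simp add: in_keys_iff)
    then have "mdeg (ind S) = i" using p unfolding homog_def by blast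
    then show ?thesis by (simp add: mdeg_ind)
  qed
  have hyp: "(\<Sum>v\<in>T. f (T - {v})) = 0" if T: "indep (whisker E) T" for T
  proof (rule ccontr)
    assume "(\<Sum>v\<in>T. f (T - {v})) \<noteq> 0"
    then have "ind T \<in> Poly_Mapping.keys ((\<Sum>v\<in>UNIV. var v) * p)"
      unfolding f_def by (simp add: lookup_L_ind in_keys_iff)
    then have "bad (whisker E) (ind T)" using Lp J_iff by blast
    moreover have "good (whisker E) (ind T)" using T good_ind[of T "whisker E"] by simp
    ultimately show False using good_imp_not_bad[of "whisker E", OF irrW] by blast
  qed
  have "\<forall>m\<in>Poly_Mapping.keys p. bad (whisker E) m"
  proof
    fix m assume m: "m \<in> Poly_Mapping.keys p"
    show "bad (whisker E) m"
    proof (rule ccontr)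
      assume "\<not> bad (whisker E) m"
      then have "good (whisker E) m" using not_good_imp_bad[of "whisker E", OF irrW] by blast
      then obtain S where S: "finite S" "indep (whisker E) S" "m = ind S" unfolding good_def by blast
      have "f S = 0" by (rule CL1[of f i E S]) (use supp hyp small S in auto)
      then show False using m S unfolding f_def by (simp add: in_keys_iff)
    qed
  qed
  then show ?thesis by (simp add: J_iff)
qed

definition proj :: "'a + 'a \<Rightarrow> 'a" where "proj = case_sum id id"

lemma proj_simps[simp]: "proj (Inl a) = a" "proj (Inr a) = a"
  by (simp_all add: proj_def)

lemma proj_adj: "proj u = proj v \<Longrightarrow> u \<noteq> v \<Longrightarrow> whisker E u v"
  by (cases u; cases v) auto

lemma surj_main:
  fixes E :: "'a::finite \<Rightarrow> 'a \<Rightarrow> bool"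
  assumes irr: "\<And>u. \<not> E u u" and edge: "E a b"
  shows "indep (whisker E) T \<Longrightarrow> card T = card (UNIV :: 'a set) \<Longrightarrow>
    (monom (ind T) :: ('a + 'a, 'k::field) mpoly) \<in>
      VS.span (pr (whisker E) ` (\<lambda>p. (\<Sum>v\<in>UNIV. var v) * p) ` homog (card (UNIV :: 'a set) - 1))"
proof (induction "card {c. Inr c \<in> T}" arbitrary: T rule: less_induct)
  case (less T)
  let ?W = "whisker E"
  let ?n = "card (UNIV :: 'a set)"
  let ?P = "pr ?W ` (\<lambda>p. (\<Sum>v\<in>UNIV. var v) * p) ` homog (?n - 1) :: ('a + 'a, 'k) mpoly set"
  have indT: "indep ?W T" and cardT: "card T = ?n" using less.prems by auto
  have injT: "inj_on proj T"
  proof (rule inj_onI, rule ccontr)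
    fix u v assume "u \<in> T" "v \<in> T" "proj u = proj v" "u \<noteq> v"
    then show False using proj_adj[of u v E] indT unfolding indep_def by blast
  qed
  have projT: "proj ` T = UNIV"
    by (rule card_subset_eq) (use card_image[OF injT] cardT in auto)
  have ex: "\<exists>w\<in>T. proj w = c" for c using projT by (metis UNIV_I imageE)
  have "\<exists>j. Inr j \<in> T"
  proof (rule ccontr)
    assume "\<nexists>j. Inr j \<in> T"
    then have "Inl c \<in> T" for c using ex[of c] by (metis proj_simps sum.exhaust)
    then show False using indT edge unfolding indep_def by (metis whisker.simps(1))
  qed
  then obtain j where jT: "Inr j \<in> T" by blast
  have jnT: "Inl j \<notin> T" using jT indT unfolding indep_def by (metis whisker.simps(2))
  define S where "S = T - {Inr j}"
  have TS: "T = insert (Inr j) S" "Inr j \<notin> S" using jT unfolding S_def by auto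
  have indS: "indep ?W S" using indT unfolding S_def indep_def by blast
  have cardS: "card S = ?n - 1" using cardT TS by simp
  have SP: "pr ?W ((\<Sum>v\<in>UNIV. var v) * monom (ind S)) \<in> ?P"
    using cardS by (auto simp: monom_in_homog mdeg_ind)
  define h where "h v = (if good ?W (e v + ind S) then monom (e v + ind S) else (0 :: ('a + 'a, 'k) mpoly))" for v
  have eq: "pr ?W ((\<Sum>v\<in>UNIV. var v) * monom (ind S)) = (\<Sum>v\<in>UNIV. h v)"
    unfolding L_monom pr_sum h_def by (simp add: pr_monom)
  have h0: "h v = 0" if v: "v \<notin> {Inr j, Inl j}" for v
  proof -
    have "\<not> good ?W (e v + ind S)"
    proof (cases "v \<in> S")
      case True
      then have "Poly_Mapping.lookup (e v + ind S) v = 2" by (simp add: lookup_add lookup_e lookup_ind)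
      then show ?thesis using good_le1[of ?W "e v + ind S" v] by (metis Suc_1 not_less_eq_eq order_refl)
    next
      case False
      obtain w where w: "w \<in> T" "proj w = proj v" using ex by blast
      have "proj v \<noteq> j" using v by (cases v) auto
      then have "w \<noteq> Inr j" using w by auto
      then have wS: "w \<in> S" using w TS by auto
      then have "w \<noteq> v" using False by auto
      then have "?W v w" using proj_adj[of v w E] w by simp
      then have "\<not> indep ?W (insert v S)" using wS unfolding indep_def by blast
      then show ?thesis using False by (simp add: ind_insert[symmetric] good_ind)
    qed
    then show ?thesis unfolding h_def by simp
  qed
  have "(\<Sum>v\<in>UNIV. h v) = (\<Sum>v\<in>{Inr j, Inl j}. h v)"
    by (rule sum.mono_neutral_right) (use h0 in auto)
  also have "\<dots> = h (Inr j) + h (Inl j)" by simp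
  finally have sumh: "(\<Sum>v\<in>UNIV. h v) = h (Inr j) + h (Inl j)" .
  have hR: "h (Inr j) = monom (ind T)"
  proof -
    have "e (Inr j) + ind S = ind T" using TS by (simp add: ind_insert)
    then show ?thesis unfolding h_def using indT by (simp add: good_ind)
  qed
  have hL: "h (Inl j) \<in> VS.span ?P"
  proof (cases "good ?W (e (Inl j) + ind S)")
    case False then show ?thesis unfolding h_def by (simp add: VS.span_zero)
  next
    case True
    define T' where "T' = insert (Inl j) S"
    have jS: "Inl j \<notin> S" using jnT TS by auto
    have eT': "e (Inl j) + ind S = ind T'" unfolding T'_def using jS by (simp add: ind_insert)
    have indT': "indep ?W T'" using True eT' by (simp add: good_ind)
    have cardT': "card T' = ?n" unfolding T'_def using jS cardS cardT
      by (metis card_insert_disjoint finite TS card_Diff_singleton_if insertI1)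
    have "{c. Inr c \<in> T'} = {c. Inr c \<in> T} - {j}" unfolding T'_def using TS by auto
    then have "card {c. Inr c \<in> T'} < card {c. Inr c \<in> T}"
      using jT by (metis card_Diff1_less finite mem_Collect_eq)
    then have "monom (ind T') \<in> VS.span ?P" using less.hyps indT' cardT' by blast
    then show ?thesis unfolding h_def using True eT' by simp
  qed
  have "monom (ind T) = pr ?W ((\<Sum>v\<in>UNIV. var v) * monom (ind S)) - h (Inl j)"
    using eq sumh hR by simp
  then show ?case using VS.span_diff[OF VS.span_base[OF SP] hL] by simp
qed




lemma dim_lower:
  assumes G: "finite G" and PG: "P \<subseteq> VS.span G" and Q: "VS.independent Q" and QP: "Q \<subseteq> VS.span P"
  shows "card Q \<le> VS.dim (P :: ('v, 'k::field) mpoly set)"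
proof -
  obtain B where B: "B \<subseteq> P" "VS.independent B" "P \<subseteq> VS.span B" "card B = VS.dim P"
    by (rule VS.basis_exists)
  have fB: "finite B" using VS.independent_span_bound[OF G B(2)] B(1) PG by blast
  have QB: "Q \<subseteq> VS.span B" using QP VS.span_minimal[OF B(3) VS.subspace_span] by blast
  show ?thesis using VS.independent_span_bound[OF fB Q QB] B(4) by simp
qed

lemma L_pscale: "(L :: ('v, 'k::comm_ring_1) mpoly) * pscale c q = pscale c (L * q)"
  by (simp add: pscale_def mult.left_commute)

theorem corollary3p2:
  fixes E :: "'a::finite \<Rightarrow> 'a \<Rightarrow> bool"
    and K :: "'k::field_char_0 itself"
  assumes sym: "\<And>u v. E u v \<Longrightarrow> E v u"
    and irrefl: "\<And>u. \<not> E u u"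
    and edges: "card (edges (whisker E)) \<ge> card (UNIV :: 'a set) + 1"
  defines "ell \<equiv> (\<Sum>v\<in>(UNIV :: ('a + 'a) set). var v) :: ('a + 'a, 'k) mpoly"
  shows "(\<forall>i. (2 * i < card (UNIV :: 'a set) \<or> i = card (UNIV :: 'a set) - 1) \<longrightarrow>
            artin_mult_rank (whisker E) ell i
              = min (artin_dim (whisker E) i K) (artin_dim (whisker E) (Suc i) K))
       \<and> (\<forall>i. 2 * i < card (UNIV :: 'a set) \<longrightarrow> artin_mult_injective (whisker E) ell i)"
proof -
  let ?W = "whisker E"
  let ?n = "card (UNIV :: 'a set)"
  have irrW: "\<And>u. \<not> ?W u u" using whisker_irrefl[of E, OF irrefl] by blast
  have npos: "?n > 0" by (simp add: card_gt_0_iff)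
  have "\<exists>a b. E a b"
  proof (rule ccontr)
    assume noE: "\<not> (\<exists>a b. E a b)"
    have "edges ?W \<subseteq> (\<lambda>a. {Inl a, Inr a}) ` UNIV"
    proof
      fix x assume "x \<in> edges ?W"
      then obtain u v where uv: "x = {u, v}" "?W u v" unfolding edges_def by blast
      show "x \<in> (\<lambda>a. {Inl a, Inr a}) ` UNIV"
        using uv noE by (cases u; cases v) auto
    qed
    then have "card (edges ?W) \<le> card ((\<lambda>a. {Inl a, Inr a :: 'a + 'a}) ` UNIV)"
      by (intro card_mono) auto
    also have "\<dots> \<le> ?n" by (rule card_image_le) simp
    finally show False using edges by simp
  qed
  then obtain a b where ab: "E a b" by blast
  have inj: "artin_mult_injective ?W ell i" if "2 * i < ?n" for i
    unfolding artin_mult_injective_def ell_def using inj_main[of E, OF irrefl that] by blast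
  have rank: "artin_mult_rank ?W ell i = min (artin_dim ?W i K) (artin_dim ?W (Suc i) K)"
    if cond: "2 * i < ?n \<or> i = ?n - 1" for i
  proof -
    define P where "P = pr ?W ` (\<lambda>p. ell * p) ` homog i"
    define GD where "GD d = {m :: 'a + 'a \<Rightarrow>\<^sub>0 nat. mdeg m = d \<and> good ?W m}" for d
    define F where "F p = pr ?W (ell * p)" for p
    have finGD: "finite (GD d)" for d unfolding GD_def by (rule finite_subset[OF _ finite_Md[of d]]) auto
    have hom: "\<And>p. p \<in> homog i \<Longrightarrow> ell * p \<in> homog (Suc i)"
      unfolding ell_def by (rule L_mult_homog)
    have r: "artin_mult_rank ?W ell i = VS.dim P"
      unfolding P_def by (rule rank_eq[OF irrW hom])
    have d1: "artin_dim ?W i K = card (GD i)" unfolding GD_def by (rule artin_dim_eq[OF irrW])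
    have d2: "artin_dim ?W (Suc i) K = card (GD (Suc i))" unfolding GD_def by (rule artin_dim_eq[OF irrW])
    have PG: "P \<subseteq> VS.span (monom ` GD (Suc i) :: ('a + 'a, 'k) mpoly set)"
    proof
      fix x assume "x \<in> P"
      then obtain p where p: "p \<in> homog i" "x = pr ?W (ell * p)" unfolding P_def by blast
      have "ell * p \<in> homog (Suc i)" using hom p(1) .
      then show "x \<in> VS.span (monom ` GD (Suc i))" unfolding GD_def p(2)
        by (intro in_span_monos) (auto simp: keys_pr homog_def)
    qed
    have finG: "finite (monom ` GD (Suc i) :: ('a + 'a, 'k) mpoly set)" using finGD by simp
    have ub1: "VS.dim P \<le> card (GD (Suc i))"
      using VS.dim_le_card[OF PG finG] card_image_le[OF finGD[of "Suc i"], of "monom :: _ \<Rightarrow> ('a + 'a, 'k) mpoly"] by linarith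
    have Fmonom: "F (monom m) = 0" if "\<not> good ?W m" for m
      unfolding F_def ell_def using pr_L_monom_bad[OF irrW not_good_imp_bad[of ?W, OF irrW that]] .
    have PF: "P \<subseteq> VS.span (F ` monom ` GD i)"
    proof
      fix x assume "x \<in> P"
      then obtain p where p: "p \<in> homog i" "x = F p" unfolding P_def F_def by blast
      have "F p = (\<Sum>m\<in>Poly_Mapping.keys p. pscale (Poly_Mapping.lookup p m) (F (monom m)))"
        unfolding F_def
        by (subst poly_expand[of p]) (simp add: sum_distrib_left pr_sum L_pscale pr_scale)
      also have "\<dots> \<in> VS.span (F ` monom ` GD i)"
      proof (rule VS.span_sum, rule VS.span_scale)
        fix m assume m: "m \<in> Poly_Mapping.keys p"
        show "F (monom m) \<in> VS.span (F ` monom ` GD i)"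
        proof (cases "good ?W m")
          case True
          then have "m \<in> GD i" using m p(1) unfolding GD_def homog_def by blast
          then show ?thesis by (intro VS.span_base) blast
        next
          case False then show ?thesis using Fmonom VS.span_zero by simp
        qed
      qed
      finally show "x \<in> VS.span (F ` monom ` GD i)" using p by simp
    qed
    have ub2: "VS.dim P \<le> card (GD i)"
    proof -
      have "VS.dim P \<le> card (F ` monom ` GD i)" by (rule VS.dim_le_card[OF PF]) (simp add: finGD)
      also have "\<dots> \<le> card (monom ` GD i :: ('a + 'a, 'k) mpoly set)" by (rule card_image_le) (simp add: finGD)
      also have "\<dots> \<le> card (GD i)" by (rule card_image_le) (simp add: finGD)
      finally show ?thesis .
    qed
    have lb: "card (GD i) \<le> VS.dim P \<or> card (GD (Suc i)) \<le> VS.dim P"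
    proof (cases "2 * i < ?n")
      case True
      have spanhom: "VS.span (monom ` GD i :: ('a + 'a, 'k) mpoly set) \<subseteq> homog i"
        by (rule VS.span_minimal[OF _ subspace_homog]) (auto simp: GD_def monom_in_homog)
      have spanfix: "VS.span (monom ` GD i :: ('a + 'a, 'k) mpoly set) \<subseteq> {x. pr ?W x = x}"
      proof (rule VS.span_minimal)
        show "monom ` GD i \<subseteq> {x :: ('a + 'a, 'k) mpoly. pr ?W x = x}"
          by (auto simp: GD_def keys_monom intro!: pr_fix)
        show "VS.subspace {x :: ('a + 'a, 'k) mpoly. pr ?W x = x}"
          by (rule VS.subspaceI) (simp_all add: pr_add pr_scale)
      qed
      have linF: "Vector_Spaces.linear pscale pscale (F :: ('a + 'a, 'k) mpoly \<Rightarrow> _)"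
        unfolding Vector_Spaces.linear_iff F_def using vector_space_pscale[where 'k='k and 'v="'a + 'a"]
        by (simp add: distrib_left pr_add L_pscale pr_scale)
      have injF: "inj_on F (VS.span (monom ` GD i))"
      proof (rule inj_onI)
        fix x y assume x: "x \<in> VS.span (monom ` GD i :: ('a + 'a, 'k) mpoly set)"
          and y: "y \<in> VS.span (monom ` GD i :: ('a + 'a, 'k) mpoly set)" and Fxy: "F x = F y"
        define d where "d = x - y"
        have dspan: "d \<in> VS.span (monom ` GD i :: ('a + 'a, 'k) mpoly set)"
          unfolding d_def using VS.span_diff[OF x y] .
        have "F d = 0" unfolding d_def F_def using Fxy unfolding F_def
          by (simp add: right_diff_distrib pr_diff)
        then have "ell * d \<in> artin_ideal ?W" unfolding F_def using pr_eq_0_iff[of ?W, OF irrW] by blast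
        then have "d \<in> artin_ideal ?W" using inj_main[of E, OF irrefl True, of d] spanhom dspan unfolding ell_def by blast
        then have "pr ?W d = 0" using pr_eq_0_iff[of ?W, OF irrW] by blast
        moreover have "pr ?W d = d" using spanfix dspan by blast
        ultimately show "x = y" unfolding d_def by simp
      qed
      have indQ: "VS.independent (F ` monom ` GD i)"
        by (rule vector_space_pair.linear_independent_injective_image[OF _ linF independent_monos injF])
           (simp add: vector_space_pair_def vector_space_pscale)
      have "card (F ` monom ` GD i) = card (monom ` GD i :: ('a + 'a, 'k) mpoly set)"
        by (rule card_image) (rule inj_on_subset[OF injF VS.span_superset])
      also have "\<dots> = card (GD i)" by (rule card_image) (rule inj_on_subset[OF monom_inj], simp)
      finally have cQ: "card (F ` monom ` GD i) = card (GD i)" .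
      have "F ` monom ` GD i \<subseteq> VS.span P"
      proof
        fix x assume "x \<in> F ` monom ` GD i"
        then obtain m where "m \<in> GD i" "x = F (monom m)" by blast
        then have "x \<in> P" unfolding P_def F_def GD_def by (auto simp: monom_in_homog)
        then show "x \<in> VS.span P" by (rule VS.span_base)
      qed
      then have "card (F ` monom ` GD i) \<le> VS.dim P" by (rule dim_lower[OF finG PG indQ])
      then show ?thesis using cQ by simp
    next
      case False
      then have i: "i = ?n - 1" using cond by simp
      then have si: "Suc i = ?n" using npos by simp
      have "monom ` GD (Suc i) \<subseteq> VS.span P"
      proof
        fix x assume "x \<in> (monom ` GD (Suc i) :: ('a + 'a, 'k) mpoly set)"
        then obtain m where m: "m \<in> GD (Suc i)" "x = monom m" by blast
        then obtain T where T: "finite T" "indep ?W T" "m = ind T" unfolding GD_def good_def by blast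
        have "card T = ?n" using m(1) T si unfolding GD_def by (simp add: mdeg_ind)
        from surj_main[of E, OF irrefl ab T(2) this, where 'k='k]
        show "x \<in> VS.span P" unfolding P_def ell_def i m(2) T(3) .
      qed
      then have "card (monom ` GD (Suc i) :: ('a + 'a, 'k) mpoly set) \<le> VS.dim P"
        by (rule dim_lower[OF finG PG independent_monos])
      moreover have "card (monom ` GD (Suc i) :: ('a + 'a, 'k) mpoly set) = card (GD (Suc i))"
        by (rule card_image) (rule inj_on_subset[OF monom_inj], simp)
      ultimately show ?thesis by simp
    qed
    show ?thesis unfolding r d1 d2 using ub1 ub2 lb by linarith
  qed
  show ?thesis using inj rank by blast
qed


end
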